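(* Let $V$ be a real vector space endowed with some topology and $X$ a convex cone in $V$ with $0\in X$. Suppose $w\in\mathbb{R}$, $f\in P_X$, and $R$ is a locally nonsatiated total preorder on $X$. If $C\subseteq X$ is a convex cone in $V$ and $R$ is $C$-antichain-convex, then $$\mathcal{M}(R,B^w_{f,X})\neq\emptyset\ \Longrightarrow\ \mathcal{M}(R,B^w_{f,X})=\mathcal{M}(R^{\operatorname{co}},B^w_{f,X}).$$
   Context: A cone in $V$ is a subset $K$ with $\lambda K\subseteq K$ for all $\lambda>0$ (possibly empty, need not contain $0$). $V^*$ denotes the continuous linear functionals on $V$; $P_X=\{f\in V^*: f(x)>0\text{ for all }x\in X\setminus\{0\}\}$; $F^w_f=\{v\in V:f(v)\le w\}$, $B^w_{f,X}=F^w_f\cap X$. A set $A$ is $C$-antichain-convex iff for all $x,y\in A$, $\lambda\in[0,1]$ with $y-x\notin C\cup(-C)$, $\lambda x+(1-\lambda)y\in A$. For a relation $R\subseteq X\times X$, $R(x)=\{t\in X:(t,x)\in R\}$; $R$ is total iff for all $s,t$, $t\in R(s)$ or $s\in R(t)$; transitive iff $r\in R(s)$ and $s\in R(t)$ imply $r\in R(t)$; a total preorder is a total transitive relation; $R$ is $C$-antichain-convex iff each $R(x)$ is $C$-antichain-convex; $R$ is locally nonsatiated iff $x\in\operatorname{cl}(\{y\in X:y\in R(x),\ x\notin R(y)\})$ for all $x\in X$. The convexification $R^{\operatorname{co}}$ is the relation on $X$ with $R^{\operatorname{co}}(x)=\operatorname{co}(R(x))$. For $S\subseteq X$ and a relation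 $Q$ on $X$, $m\in S$ is $Q$-maximal on $S$ iff for every $s\in S$ with $s\in Q(m)$, $m\in Q(s)$; $\mathcal{M}(Q,S)$ is the set of these. *)

theory Defs
  imports "HOL-Analysis.Analysis"
begin

text \<open>Cone in the paper's sense: closed under positive scalings (may be empty, need not contain 0).\<close>
definition pcone :: "'v::real_vector set \<Rightarrow> bool" where
  "pcone K \<longleftrightarrow> (\<forall>x\<in>K. \<forall>l::real. l > 0 \<longrightarrow> l *\<^sub>R x \<in> K)"

definition dual_space :: "('v::{real_vector,topological_space} \<Rightarrow> real) set" where
  "dual_space = {f. linear f \<and> continuous_on UNIV f}"

definition PX :: "'v::{real_vector,topological_space} set \<Rightarrow> ('v \<Rightarrow> real) set" where
  "PX X = {f \<in> dual_space. \<forall>x \<in> X - {0}. f x > 0}"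

definition Fw :: "real \<Rightarrow> ('v \<Rightarrow> real) \<Rightarrow> 'v set" where
  "Fw w f = {v. f v \<le> w}"

definition Bw :: "real \<Rightarrow> ('v \<Rightarrow> real) \<Rightarrow> 'v set \<Rightarrow> 'v set" where
  "Bw w f X = Fw w f \<inter> X"

definition antichain_convex :: "'v::real_vector set \<Rightarrow> 'v set \<Rightarrow> bool" where
  "antichain_convex C A \<longleftrightarrow>
     (\<forall>x\<in>A. \<forall>y\<in>A. \<forall>l::real. 0 \<le> l \<and> l \<le> 1 \<and> y - x \<notin> C \<union> uminus ` C
        \<longrightarrow> l *\<^sub>R x + (1 - l) *\<^sub>R y \<in> A)"

definition sect :: "'a set \<Rightarrow> ('a \<times> 'a) set \<Rightarrow> 'a \<Rightarrow> 'a set" where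
  "sect X R x = {t \<in> X. (t, x) \<in> R}"

definition rel_total :: "'a set \<Rightarrow> ('a \<times> 'a) set \<Rightarrow> bool" where
  "rel_total X R \<longleftrightarrow> (\<forall>s\<in>X. \<forall>t\<in>X. t \<in> sect X R s \<or> s \<in> sect X R t)"

definition rel_trans :: "'a set \<Rightarrow> ('a \<times> 'a) set \<Rightarrow> bool" where
  "rel_trans X R \<longleftrightarrow> (\<forall>r\<in>X. \<forall>s\<in>X. \<forall>t\<in>X.
      r \<in> sect X R s \<and> s \<in> sect X R t \<longrightarrow> r \<in> sect X R t)"

definition total_preorder :: "'a set \<Rightarrow> ('a \<times> 'a) set \<Rightarrow> bool" where
  "total_preorder X R \<longleftrightarrow> rel_total X R \<and> rel_trans X R"

definition rel_antichain_convex :: "'v::real_vector set \<Rightarrow> 'v set \<Rightarrow> ('v \<times> 'v) set \<Rightarrow> bool" where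
  "rel_antichain_convex C X R \<longleftrightarrow> (\<forall>x\<in>X. antichain_convex C (sect X R x))"

definition locally_nonsatiated :: "'v::topological_space set \<Rightarrow> ('v \<times> 'v) set \<Rightarrow> bool" where
  "locally_nonsatiated X R \<longleftrightarrow>
     (\<forall>x\<in>X. x \<in> closure {y \<in> X. y \<in> sect X R x \<and> x \<notin> sect X R y})"

definition convexification :: "'v::real_vector set \<Rightarrow> ('v \<times> 'v) set \<Rightarrow> ('v \<times> 'v) set" where
  "convexification X R = {(t, x). x \<in> X \<and> t \<in> convex hull (sect X R x)}"

definition maximals :: "'a set \<Rightarrow> ('a \<times> 'a) set \<Rightarrow> 'a set \<Rightarrow> 'a set" where
  "maximals X Q S = {m \<in> S. \<forall>s\<in>S. s \<in> sect X Q m \<longrightarrow> m \<in> sect X Q s}"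

end

theory Submission
  imports Defs
begin

theorem theorem15:
  fixes X C :: "'v::{real_vector,topological_space} set"
    and R :: "('v \<times> 'v) set" and f :: "'v \<Rightarrow> real" and w :: real
  assumes "convex X" and "pcone X" and "0 \<in> X"
    and "f \<in> PX X"
    and "R \<subseteq> X \<times> X" and "total_preorder X R" and "locally_nonsatiated X R"
    and "C \<subseteq> X" and "convex C" and "pcone C"
    and "rel_antichain_convex C X R"
    and "maximals X R (Bw w f X) \<noteq> {}"
  shows "maximals X R (Bw w f X) = maximals X (convexification X R) (Bw w f X)"
proof -
  have lin: "linear f" and cont: "continuous_on UNIV f" and pos: "\<And>x. x \<in> X \<Longrightarrow> x \<noteq> 0 \<Longrightarrow> f x > 0"
    using assms(4) by (auto simp: PX_def dual_space_def)
  have tot: "\<And>s t. s \<in> X \<Longrightarrow> t \<in> X \<Longrightarrow> (t, s) \<in> R \<or> (s, t) \<in> R"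
    using assms(6) by (auto simp: total_preorder_def rel_total_def sect_def)
  have tr: "\<And>r s t. r \<in> X \<Longrightarrow> s \<in> X \<Longrightarrow> t \<in> X \<Longrightarrow> (r, s) \<in> R \<Longrightarrow> (s, t) \<in> R \<Longrightarrow> (r, t) \<in> R"
    using assms(6) unfolding total_preorder_def rel_trans_def sect_def by blast
  have B_def': "Bw w f X = {v \<in> X. f v \<le> w}" by (auto simp: Bw_def Fw_def)
  obtain ms where ms: "ms \<in> maximals X R (Bw w f X)" using assms(12) by blast
  have msB: "ms \<in> X" "f ms \<le> w" using ms by (auto simp: maximals_def B_def')
  have msmax: "\<And>s. s \<in> X \<Longrightarrow> f s \<le> w \<Longrightarrow> (s, ms) \<in> R \<Longrightarrow> (ms, s) \<in> R"
    using ms by (auto simp: maximals_def B_def' sect_def)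
  have msbest: "\<And>s. s \<in> X \<Longrightarrow> f s \<le> w \<Longrightarrow> (ms, s) \<in> R"
    using msmax tot msB by blast
  have geq: "f t \<ge> w" if t: "t \<in> X" "(t, ms) \<in> R" for t
  proof -
    have sub: "{y \<in> X. y \<in> sect X R t \<and> t \<notin> sect X R y} \<subseteq> {v. w \<le> f v}"
    proof
      fix y assume y: "y \<in> {y \<in> X. y \<in> sect X R t \<and> t \<notin> sect X R y}"
      hence yX: "y \<in> X" and yt: "(y, t) \<in> R" and nty: "(t, y) \<notin> R" by (auto simp: sect_def t)
      show "y \<in> {v. w \<le> f v}"
      proof (rule ccontr)
        assume "y \<notin> {v. w \<le> f v}"
        hence "f y \<le> w" by auto
        hence "(ms, y) \<in> R" using msbest yX by auto
        hence "(t, y) \<in> R" using tr[OF t(1) msB(1) yX] t(2) by blast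
        thus False using nty by blast
      qed
    qed
    have cl: "closed {v. w \<le> f v}"
      by (rule closed_Collect_le) (auto intro: continuous_intros cont)
    have "t \<in> closure {y \<in> X. y \<in> sect X R t \<and> t \<notin> sect X R y}"
      using assms(7) t unfolding locally_nonsatiated_def by blast
    hence "t \<in> {v. w \<le> f v}" using closure_minimal[OF sub cl] by blast
    thus ?thesis by simp
  qed
  define A where "A = {t \<in> sect X R ms. f t = w}"
  have convA: "convex A"
    unfolding convex_alt
  proof (intro ballI allI impI)
    fix x y and u :: real
    assume x: "x \<in> A" and y: "y \<in> A" and u: "0 \<le> u \<and> u \<le> 1"
    show "(1 - u) *\<^sub>R x + u *\<^sub>R y \<in> A"
    proof (cases "x = y")
      case True
      thus ?thesis using x by (simp add: algebra_simps flip: scaleR_add_left)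
    next
      case False
      have fx: "f x = w" "f y = w" using x y by (auto simp: A_def)
      have xX: "x \<in> X" "y \<in> X" using x y by (auto simp: A_def sect_def)
      have nC: "x - y \<notin> C \<union> uminus ` C"
      proof
        assume "x - y \<in> C \<union> uminus ` C"
        then consider "x - y \<in> C" | "y - x \<in> C" by (metis UnE imageE minus_diff_eq minus_minus)
        thus False
        proof cases
          case 1
          hence "f (x - y) > 0" using pos assms(8) False by auto
          thus False using fx linear_diff[OF lin] by simp
        next
          case 2
          hence "f (y - x) > 0" using pos assms(8) False by auto
          thus False using fx linear_diff[OF lin] by simp
        qed
      qed
      have ac: "antichain_convex C (sect X R ms)"
        using assms(11) msB unfolding rel_antichain_convex_def by blast
      have "u *\<^sub>R y + (1 - u) *\<^sub>R x \<in> sect X R ms"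
        using ac x y u nC unfolding antichain_convex_def A_def by blast
      moreover have "f (u *\<^sub>R y + (1 - u) *\<^sub>R x) = w"
      proof -
        have "f (u *\<^sub>R y + (1 - u) *\<^sub>R x) = u * f y + (1 - u) * f x"
          by (simp only: linear_add[OF lin] linear_scale[OF lin] real_scaleR_def)
        also have "\<dots> = w" using fx by (simp add: algebra_simps)
        finally show ?thesis .
      qed
      ultimately show ?thesis by (simp add: A_def add.commute)
    qed
  qed
  define D where "D = A \<union> {v. f v > w}"
  have Dge: "\<And>v. v \<in> D \<Longrightarrow> f v \<ge> w" by (auto simp: D_def A_def)
  have convD: "convex D"
  proof (rule convexI)
    fix x y and u v :: real
    assume x: "x \<in> D" and y: "y \<in> D" and uv0: "0 \<le> u" "0 \<le> v" "u + v = 1"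
    hence uv: "0 \<le> u \<and> 0 \<le> v \<and> u + v = 1" by simp
    have fc: "f (u *\<^sub>R x + v *\<^sub>R y) = u * f x + v * f y"
      by (simp add: linear_add[OF lin] linear_scale[OF lin])
    show "u *\<^sub>R x + v *\<^sub>R y \<in> D"
    proof (cases "x \<in> A \<and> y \<in> A")
      case True
      thus ?thesis using convA uv unfolding convex_def D_def by blast
    next
      case False
      hence "f x > w \<or> f y > w" using x y by (auto simp: D_def)
      moreover have "f x \<ge> w" "f y \<ge> w" using Dge x y by auto
      ultimately consider "f x > w" "u > 0" | "f y > w" "v > 0" | "u = 0" | "v = 0"
        using uv by force
      thus ?thesis
      proof cases
        case 1
        have "u * f x > u * w" using 1 by simp
        moreover have "v * f y \<ge> v * w" using uv \<open>f y \<ge> w\<close> by (simp add: mult_left_mono)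
        ultimately have "u * f x + v * f y > (u + v) * w" by (simp add: algebra_simps)
        thus ?thesis using fc uv by (simp add: D_def)
      next
        case 2
        have "v * f y > v * w" using 2 by simp
        moreover have "u * f x \<ge> u * w" using uv \<open>f x \<ge> w\<close> by (simp add: mult_left_mono)
        ultimately have "u * f x + v * f y > (u + v) * w" by (simp add: algebra_simps)
        thus ?thesis using fc uv by (simp add: D_def)
      next
        case 3 thus ?thesis using uv y by simp
      next
        case 4 thus ?thesis using uv x by simp
      qed
    qed
  qed
  have RD: "sect X R ms \<subseteq> D"
  proof
    fix t assume t: "t \<in> sect X R ms"
    hence "f t \<ge> w" using geq by (auto simp: sect_def)
    thus "t \<in> D" using t by (cases "f t = w") (auto simp: D_def A_def)
  qed
  have hullD: "convex hull (sect X R ms) \<subseteq> D"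
    by (rule hull_minimal[where S=convex, OF RD convD])
  show ?thesis
  proof
    show "maximals X R (Bw w f X) \<subseteq> maximals X (convexification X R) (Bw w f X)"
    proof
      fix m assume m: "m \<in> maximals X R (Bw w f X)"
      have mX: "m \<in> X" using m by (auto simp: maximals_def B_def')
      show "m \<in> maximals X (convexification X R) (Bw w f X)"
        unfolding maximals_def
      proof (intro CollectI conjI ballI impI)
        show "m \<in> Bw w f X" using m by (auto simp: maximals_def)
        fix s assume sB: "s \<in> Bw w f X" and "s \<in> sect X (convexification X R) m"
        have sX: "s \<in> X" using sB by (auto simp: B_def')
        have "m \<in> sect X R s"
        proof (cases "(m, s) \<in> R")
          case True thus ?thesis using mX by (simp add: sect_def)
        next
          case False
          hence "(s, m) \<in> R" using tot mX sX by blast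
          thus ?thesis using m sB sX by (auto simp: maximals_def sect_def)
        qed
        thus "m \<in> sect X (convexification X R) s"
          using sX by (auto simp: sect_def convexification_def intro: hull_inc)
      qed
    qed
  next
    show "maximals X (convexification X R) (Bw w f X) \<subseteq> maximals X R (Bw w f X)"
    proof
      fix m assume m: "m \<in> maximals X (convexification X R) (Bw w f X)"
      have mB: "m \<in> X" "f m \<le> w" using m by (auto simp: maximals_def B_def')
      have "(ms, m) \<in> R" using msbest mB by auto
      hence "ms \<in> sect X (convexification X R) m"
        using mB msB by (auto simp: sect_def convexification_def intro: hull_inc)
      moreover have "ms \<in> Bw w f X" using msB by (simp add: B_def')
      ultimately have "m \<in> sect X (convexification X R) ms"
        using m unfolding maximals_def by blast
      hence "m \<in> convex hull (sect X R ms)" by (simp add: sect_def convexification_def)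
      hence "m \<in> D" using hullD by blast
      hence "m \<in> A" using mB by (auto simp: D_def)
      hence mms: "(m, ms) \<in> R" by (simp add: A_def sect_def)
      show "m \<in> maximals X R (Bw w f X)"
        unfolding maximals_def
      proof (intro CollectI conjI ballI impI)
        show "m \<in> Bw w f X" using mB by (simp add: B_def')
        fix s assume sB: "s \<in> Bw w f X" and "s \<in> sect X R m"
        have sX: "s \<in> X" "f s \<le> w" using sB by (auto simp: B_def')
        have "(ms, s) \<in> R" using msbest sX by auto
        hence "(m, s) \<in> R" using tr[OF mB(1) msB(1) sX(1)] mms by blast
        thus "m \<in> sect X R s" using mB by (simp add: sect_def)
      qed
    qed
  qed
qed

end
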